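(* Let $X$ be a real Banach space and let $M\subset X\times X^*$ be a linear subspace (a linear point-to-set operator $M:X\rightrightarrows X^*$). Then: (1) if $M$ is skew, then $M$ is maximal self-cancelling; (2) if $M$ is maximal self-cancelling and $D(M)$ is closed, then $M$ is skew; (3) if $M$ is maximal self-cancelling, $R(M)$ is closed and $X$ is reflexive, then $M$ is skew.
   Context: $\langle x,x^*\rangle=x^*(x)$. For $B\subset X\times X^*$, $B^\vdash=\{(y,y^* )\mid \langle x,y^*\rangle+\langle y,x^*\rangle=0\ \forall (x,x^* )\in B\}$ and $-B=\{(x,-x^* )\mid (x,x^* )\in B\}$. The adjoint of a linear $M$ is $M^*=(-M)^\vdash$, and $M$ is skew if $M=-M^*$ (equivalently $M=M^\vdash$). $M$ is self-cancelling if it is a linear subspace with $\langle x,x^*\rangle=0$ for all $(x,x^* )\in M$, and maximal self-cancelling if it is self-cancelling and not properly contained in any self-cancelling subset of $X\times X^*$. $D(M)=\{x\mid \exists x^*,\ (x,x^* )\in M\}$ and $R(M)=\{x^*\mid \exists x,\ (x,x^* )\in M\}$. *)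

theory Defs
  imports "HOL-Analysis.Analysis"
begin

(* The dual X* of a real Banach space X is the space of bounded linear
   functionals 'a =>L real (norm topology); the pairing is x* applied to x. *)

definition perp_op :: "('a::real_normed_vector \<times> ('a \<Rightarrow>\<^sub>L real)) set \<Rightarrow> ('a \<times> ('a \<Rightarrow>\<^sub>L real)) set" where
  "perp_op B = {(y, ys). \<forall>(x, xs)\<in>B. blinfun_apply ys x + blinfun_apply xs y = 0}"

definition neg_op :: "('a::real_normed_vector \<times> ('a \<Rightarrow>\<^sub>L real)) set \<Rightarrow> ('a \<times> ('a \<Rightarrow>\<^sub>L real)) set" where
  "neg_op B = {(x, - xs) | x xs. (x, xs) \<in> B}"

definition adjoint_op :: "('a::real_normed_vector \<times> ('a \<Rightarrow>\<^sub>L real)) set \<Rightarrow> ('a \<times> ('a \<Rightarrow>\<^sub>L real)) set" where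
  "adjoint_op M = perp_op (neg_op M)"

definition skew_op :: "('a::real_normed_vector \<times> ('a \<Rightarrow>\<^sub>L real)) set \<Rightarrow> bool" where
  "skew_op M \<longleftrightarrow> M = neg_op (adjoint_op M)"

definition self_cancelling :: "('a::real_normed_vector \<times> ('a \<Rightarrow>\<^sub>L real)) set \<Rightarrow> bool" where
  "self_cancelling M \<longleftrightarrow> subspace M \<and> (\<forall>(x, xs)\<in>M. blinfun_apply xs x = 0)"

definition max_self_cancelling :: "('a::real_normed_vector \<times> ('a \<Rightarrow>\<^sub>L real)) set \<Rightarrow> bool" where
  "max_self_cancelling M \<longleftrightarrow> self_cancelling M \<and>
     (\<forall>N. self_cancelling N \<and> M \<subseteq> N \<longrightarrow> N = M)"

definition dom_op :: "('a \<times> 'b) set \<Rightarrow> 'a set" where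
  "dom_op M = fst ` M"

definition ran_op :: "('a \<times> 'b) set \<Rightarrow> 'b set" where
  "ran_op M = snd ` M"

definition reflexive_space :: "'a::real_normed_vector itself \<Rightarrow> bool" where
  "reflexive_space _ \<longleftrightarrow>
     (\<forall>\<phi> :: ('a \<Rightarrow>\<^sub>L real) \<Rightarrow>\<^sub>L real. \<exists>x::'a. \<forall>f. blinfun_apply \<phi> f = blinfun_apply f x)"

end

theory Submission
  imports Defs
begin


definition adm :: "('a::real_normed_vector \<times> real) set \<Rightarrow> bool" where
  "adm G \<longleftrightarrow> subspace G \<and> (\<forall>a. (0,a) \<in> G \<longrightarrow> a = 0) \<and> (\<forall>(x,a)\<in>G. a \<le> norm x)"

lemma adm_fun:
  assumes "adm G" "(x,a) \<in> G" "(x,b) \<in> G" shows "a = b"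
proof -
  have "(x,a) - (x,b) \<in> G" using assms by (simp add: adm_def subspace_diff del: diff_Pair)
  then have "(0, a - b) \<in> G" by simp
  then show ?thesis using assms(1) by (auto simp: adm_def)
qed

lemma adm_chain:
  assumes C: "C \<noteq> {}" "\<And>G. G \<in> C \<Longrightarrow> adm G" "\<And>X Y. X \<in> C \<Longrightarrow> Y \<in> C \<Longrightarrow> X \<subseteq> Y \<or> Y \<subseteq> X"
  shows "adm (\<Union>C)"
proof -
  have sub: "subspace (\<Union>C)"
    unfolding subspace_def
  proof (intro conjI ballI allI)
    obtain G where "G \<in> C" using C by auto
    then show "0 \<in> \<Union>C" using C(2) by (auto simp: adm_def subspace_def)
  next
    fix x y assume "x \<in> \<Union>C" "y \<in> \<Union>C"
    then obtain X Y where "X \<in> C" "Y \<in> C" "x \<in> X" "y \<in> Y" by auto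
    then show "x + y \<in> \<Union>C" using C(2) C(3)[of X Y]
      by (metis UnionI adm_def subset_iff subspace_add)
  next
    fix c x assume "x \<in> \<Union>C"
    then obtain X where "X \<in> C" "x \<in> X" by auto
    then show "c *\<^sub>R x \<in> \<Union>C" using C(2)[of X]
      by (metis UnionI adm_def subspace_scale)
  qed
  have z: "a = 0" if h0: "(0,a) \<in> \<Union>C" for a
  proof -
    obtain G where "G \<in> C" "(0,a) \<in> G" using h0 by blast
    then show ?thesis using C(2)[of G] unfolding adm_def by blast
  qed
  have b: "a \<le> norm x" if h0: "(x,a) \<in> \<Union>C" for x a
  proof -
    obtain G where "G \<in> C" "(x,a) \<in> G" using h0 by blast
    then show ?thesis using C(2)[of G] unfolding adm_def by blast
  qed
  show ?thesis unfolding adm_def using sub z b by blast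
qed

lemma adm_extend:
  assumes "adm G" and y: "y \<notin> fst ` G"
  shows "\<exists>c. adm {(x + t *\<^sub>R y, a + t * c) | x a t. (x,a) \<in> G}"
proof -
  have sG: "subspace G" and z: "\<And>a. (0,a) \<in> G \<Longrightarrow> a = 0" and bd: "\<And>x a. (x,a)\<in>G \<Longrightarrow> a \<le> norm x"
    using assms(1) by (auto simp: adm_def)
  have key: "a - norm (u - y) \<le> norm (v + y) - b" if "(u,a)\<in>G" "(v,b)\<in>G" for u a v b
  proof -
    have "(u,a) + (v,b) \<in> G" using subspace_add[OF sG that] .
    then have "(u + v, a + b) \<in> G" by simp
    then have "a + b \<le> norm (u + v)" by (rule bd)
    also have "\<dots> \<le> norm (u - y) + norm (v + y)"
      using norm_triangle_ineq[of "u - y" "v + y"] by simp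
    finally show ?thesis by simp
  qed
  define S where "S = {a - norm (u - y) | u a. (u,a) \<in> G}"
  define c where "c = Sup S"
  have "0 \<in> G" using sG subspace_0 by blast
  then have ne: "S \<noteq> {}" unfolding S_def by (auto simp: zero_prod_def)
  have "(0,0) \<in> G" using \<open>0 \<in> G\<close> by (simp add: zero_prod_def)
  then have bdd: "bdd_above S" unfolding S_def bdd_above_def
    using key[of _ _ 0 0] by (intro exI[of _ "norm y"]) force
  have c1: "a - norm (u - y) \<le> c" if "(u,a)\<in>G" for u a
    unfolding c_def using that bdd by (intro cSup_upper) (auto simp: S_def)
  have c2: "c \<le> norm (v + y) - b" if "(v,b)\<in>G" for v b
    unfolding c_def using ne key that by (intro cSup_least) (auto simp: S_def)
  define G' where "G' = {(x + t *\<^sub>R y, a + t * c) | x a t. (x,a) \<in> G}"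
  have mem: "(x + t *\<^sub>R y, a + t * c) \<in> G'" if "(x,a) \<in> G" for x a t
    unfolding G'_def using that by blast
  have "subspace G'"
    unfolding subspace_def
  proof (intro conjI ballI allI)
    show "0 \<in> G'" using mem[of 0 0 0] \<open>0\<in>G\<close> by (simp add: zero_prod_def)
  next
    fix p q assume "p \<in> G'" "q \<in> G'"
    then obtain x a t x' a' t' where "p = (x + t *\<^sub>R y, a + t * c)" "(x,a)\<in>G"
      "q = (x' + t' *\<^sub>R y, a' + t' * c)" "(x',a')\<in>G" unfolding G'_def by blast
    moreover have "(x + x', a + a') \<in> G" using subspace_add[OF sG, of "(x,a)" "(x',a')"] calculation by simp
    ultimately show "p + q \<in> G'" using mem[of "x + x'" "a + a'" "t + t'"]
      by (simp add: algebra_simps)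
  next
    fix r p assume "p \<in> G'"
    then obtain x a t where "p = (x + t *\<^sub>R y, a + t * c)" "(x,a)\<in>G" unfolding G'_def by blast
    moreover have "(r *\<^sub>R x, r * a) \<in> G" using subspace_scale[OF sG, of "(x,a)" r] calculation by simp
    ultimately show "r *\<^sub>R p \<in> G'" using mem[of "r *\<^sub>R x" "r * a" "r * t"]
      by (simp add: algebra_simps)
  qed
  moreover have "b = 0" if b0: "(0,b) \<in> G'" for b
  proof -
    obtain x a t where e: "0 = x + t *\<^sub>R y" "b = a + t * c" "(x,a)\<in>G" using b0 unfolding G'_def by blast
    show ?thesis
    proof (cases "t = 0")
      case True then show ?thesis using e z by auto
    next
      case False
      have "((-1/t) *\<^sub>R x, (-1/t) * a) \<in> G" using subspace_scale[OF sG, of "(x,a)" "-1/t"] e by simp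
      moreover have "(-1/t) *\<^sub>R x = y"
      proof -
        have ty: "t *\<^sub>R y = - x" using e(1) by (metis add.commute eq_neg_iff_add_eq_0)
        have "y = (1/t) *\<^sub>R (t *\<^sub>R y)" using False by simp
        also have "\<dots> = (-1/t) *\<^sub>R x" using ty by simp
        finally show ?thesis by simp
      qed
      ultimately have "y \<in> fst ` G" by force
      with y show ?thesis by simp
    qed
  qed
  moreover have "b \<le> norm w" if wb: "(w,b) \<in> G'" for w b
  proof -
    obtain x a t where e: "w = x + t *\<^sub>R y" "b = a + t * c" "(x,a)\<in>G" using wb unfolding G'_def by blast
    consider "t = 0" | "t > 0" | "t < 0" by linarith
    then show ?thesis
    proof cases
      case 1 then show ?thesis using e bd by auto
    next
      case 2
      have "((1/t) *\<^sub>R x, (1/t) * a) \<in> G" using subspace_scale[OF sG, of "(x,a)" "1/t"] e by simp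
      then have "c \<le> norm ((1/t) *\<^sub>R x + y) - (1/t) * a" by (rule c2)
      then have "t * c \<le> t * (norm ((1/t) *\<^sub>R x + y) - (1/t) * a)" using 2
        by (intro mult_left_mono) auto
      also have "\<dots> = t * norm ((1/t) *\<^sub>R x + y) - a" using 2
        by (simp add: right_diff_distrib)
      finally have "t * c \<le> t * norm ((1/t) *\<^sub>R x + y) - a" .
      also have "t * norm ((1/t) *\<^sub>R x + y) = norm (x + t *\<^sub>R y)"
      proof -
        have "t * norm ((1/t) *\<^sub>R x + y) = norm (t *\<^sub>R ((1/t) *\<^sub>R x + y))" using 2 by simp
        also have "t *\<^sub>R ((1/t) *\<^sub>R x + y) = x + t *\<^sub>R y" using 2 by (simp add: scaleR_add_right)
        finally show ?thesis .
      qed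
      finally show ?thesis using e by simp
    next
      case 3
      define s where "s = -t"
      have s: "s > 0" using 3 s_def by simp
      have "((1/s) *\<^sub>R x, (1/s) * a) \<in> G" using subspace_scale[OF sG, of "(x,a)" "1/s"] e by simp
      then have "(1/s) * a - norm ((1/s) *\<^sub>R x - y) \<le> c" by (rule c1)
      then have "s * ((1/s) * a - norm ((1/s) *\<^sub>R x - y)) \<le> s * c" using s by (simp add: mult_left_mono)
      then have "a - s * norm ((1/s) *\<^sub>R x - y) \<le> s * c" using s by (simp add: right_diff_distrib)
      moreover have "s * norm ((1/s) *\<^sub>R x - y) = norm (x + t *\<^sub>R y)"
      proof -
        have "s * norm ((1/s) *\<^sub>R x - y) = norm (s *\<^sub>R ((1/s) *\<^sub>R x - y))" using s by simp
        also have "s *\<^sub>R ((1/s) *\<^sub>R x - y) = x + t *\<^sub>R y" using s by (simp add: scaleR_diff_right s_def)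
        finally show ?thesis .
      qed
      ultimately show ?thesis using e s_def by simp
    qed
  qed
  ultimately have "adm G'" unfolding adm_def by blast
  then show ?thesis unfolding G'_def by blast
qed

lemma hahn_banach:
  fixes G0 :: "('a::real_normed_vector \<times> real) set"
  assumes "adm G0"
  shows "\<exists>h. bounded_linear h \<and> (\<forall>(x,a)\<in>G0. h x = a)"
proof -
  define A where "A = {G. adm G \<and> G0 \<subseteq> G}"
  have "\<exists>M\<in>A. \<forall>X\<in>A. M \<subseteq> X \<longrightarrow> X = M"
  proof (rule subset_Zorn_nonempty)
    show "A \<noteq> {}" using assms by (auto simp: A_def)
  next
    fix C assume "C \<noteq> {}" "subset.chain A C"
    then show "\<Union>C \<in> A" unfolding A_def using adm_chain[of C]
      by (auto simp: subset_chain_def)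
  qed
  then obtain G where GA: "G \<in> A" and mx0: "\<forall>X\<in>A. G \<subseteq> X \<longrightarrow> X = G"
    by blast
  have G: "adm G" "G0 \<subseteq> G" using GA by (simp_all add: A_def)
  have mx: "X = G" if "adm X" "G0 \<subseteq> X" "G \<subseteq> X" for X
    using mx0 that by (simp add: A_def)
  have sG: "subspace G" using G by (simp add: adm_def)
  have full: "y \<in> fst ` G" for y
  proof (rule ccontr)
    assume ny: "y \<notin> fst ` G"
    then obtain c where a: "adm {(x + t *\<^sub>R y, a + t * c) | x a t. (x,a) \<in> G}" (is "adm ?G'")
      using adm_extend[OF G(1)] by blast
    have mem: "(x + t *\<^sub>R y, a + t * c) \<in> ?G'" if "(x,a) \<in> G" for x a t
      using that by blast
    have sub: "G \<subseteq> ?G'" using mem[of _ _ 0] by auto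
    have "0 \<in> G" using sG subspace_0 by blast
    then have "(y, c) \<in> ?G'" using mem[of 0 0 1] by (simp add: zero_prod_def)
    moreover have "(y,c) \<notin> G" using ny by force
    ultimately show False using mx[OF a] G(2) sub by blast
  qed
  define h where "h x = (THE a. (x,a) \<in> G)" for x
  have hG: "(x, h x) \<in> G" for x
  proof -
    obtain a where "(x,a) \<in> G" using full[of x] by force
    then show ?thesis unfolding h_def using adm_fun[OF G(1)] by (metis theI)
  qed
  have hE: "h x = a" if "(x,a) \<in> G" for x a using adm_fun[OF G(1) hG that] .
  have add: "h (x + y) = h x + h y" for x y
    using hE subspace_add[OF sG hG hG] by simp
  have scl: "h (r *\<^sub>R x) = r * h x" for r x
    using hE subspace_scale[OF sG hG, of r] by simp
  have bd: "\<bar>h x\<bar> \<le> norm x" for x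
  proof -
    have b: "\<And>x a. (x,a)\<in>G \<Longrightarrow> a \<le> norm x" using G(1) by (auto simp: adm_def)
    have "h x \<le> norm x" by (rule b[OF hG])
    moreover have "h (-x) \<le> norm (-x)" by (rule b[OF hG])
    moreover have "h (-x) = - h x" using scl[of "-1" x] by simp
    ultimately show ?thesis by auto
  qed
  have "bounded_linear h"
    by (rule bounded_linear_intro[of _ 1]) (use add scl bd in auto)
  moreover have "\<forall>(x,a)\<in>G0. h x = a" using hE G(2) by auto
  ultimately show ?thesis by blast
qed

lemma separation:
  fixes S :: "'a::real_normed_vector set"
  assumes "subspace S" "closed S" "y \<notin> S"
  shows "\<exists>f :: 'a \<Rightarrow>\<^sub>L real. (\<forall>s\<in>S. blinfun_apply f s = 0) \<and> blinfun_apply f y \<noteq> 0"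
proof -
  define d where "d = infdist y S"
  have "S \<noteq> {}" using assms(1) subspace_0 by blast
  then have dpos: "d > 0" using assms by (simp add: d_def in_closed_iff_infdist_zero infdist_pos_not_in_closed)
  define G0 where "G0 = {(s + t *\<^sub>R y, t * d) | s t. s \<in> S}"
  have mem: "(s + t *\<^sub>R y, t * d) \<in> G0" if "s \<in> S" for s t
    unfolding G0_def using that by blast
  have "adm G0"
    unfolding adm_def
  proof (intro conjI allI impI ballI)
    show "subspace G0" unfolding subspace_def
    proof (intro conjI ballI allI)
      show "0 \<in> G0" using mem[of 0 0] subspace_0[OF assms(1)] by (simp add: zero_prod_def)
    next
      fix p q assume "p \<in> G0" "q \<in> G0"
      then obtain s t s' t' where "p = (s + t *\<^sub>R y, t * d)" "s \<in> S" "q = (s' + t' *\<^sub>R y, t' * d)" "s' \<in> S"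
        unfolding G0_def by blast
      then show "p + q \<in> G0" using mem[of "s + s'" "t + t'"] subspace_add[OF assms(1)]
        by (simp add: algebra_simps)
    next
      fix r p assume "p \<in> G0"
      then obtain s t where "p = (s + t *\<^sub>R y, t * d)" "s \<in> S" unfolding G0_def by blast
      then show "r *\<^sub>R p \<in> G0" using mem[of "r *\<^sub>R s" "r * t"] subspace_scale[OF assms(1)]
        by (simp add: algebra_simps)
    qed
  next
    fix a assume "(0, a) \<in> G0"
    then obtain s t where e: "0 = s + t *\<^sub>R y" "a = t * d" "s \<in> S" unfolding G0_def by blast
    show "a = 0"
    proof (cases "t = 0")
      case True then show ?thesis using e by simp
    next
      case False
      have "(-1/t) *\<^sub>R s \<in> S" using subspace_scale[OF assms(1) e(3)] .
      moreover have "(-1/t) *\<^sub>R s = y"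
      proof -
        have ty: "t *\<^sub>R y = - s" using e(1) by (metis add.commute eq_neg_iff_add_eq_0)
        have "y = (1/t) *\<^sub>R (t *\<^sub>R y)" using False by simp
        also have "\<dots> = (-1/t) *\<^sub>R s" using ty by simp
        finally show ?thesis by simp
      qed
      ultimately show ?thesis using assms(3) by simp
    qed
  next
    fix p assume "p \<in> G0"
    then obtain s t where e: "p = (s + t *\<^sub>R y, t * d)" "s \<in> S" unfolding G0_def by blast
    have "t * d \<le> norm (s + t *\<^sub>R y)"
    proof (cases "t > 0")
      case False then show ?thesis using dpos by (smt (verit) mult_nonpos_nonneg norm_ge_zero)
    next
      case True
      have "-(1/t) *\<^sub>R s \<in> S" using subspace_scale[OF assms(1) e(2)] .
      then have "d \<le> dist y (-(1/t) *\<^sub>R s)" unfolding d_def by (rule infdist_le)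
      also have "dist y (-(1/t) *\<^sub>R s) = norm ((1/t) *\<^sub>R s + y)" by (simp add: dist_norm add.commute)
      finally have "t * d \<le> t * norm ((1/t) *\<^sub>R s + y)" using True by simp
      also have "t * norm ((1/t) *\<^sub>R s + y) = norm (t *\<^sub>R ((1/t) *\<^sub>R s + y))" using True by simp
      also have "t *\<^sub>R ((1/t) *\<^sub>R s + y) = s + t *\<^sub>R y" using True by (simp add: scaleR_add_right)
      finally show ?thesis .
    qed
    then show "case p of (x, a) \<Rightarrow> a \<le> norm x" using e by simp
  qed
  then obtain h where h: "bounded_linear h" "\<forall>(x,a)\<in>G0. h x = a" using hahn_banach by blast
  have "(s, 0) \<in> G0" if "s \<in> S" for s using mem[OF that, of 0] by simp
  moreover have "(y, d) \<in> G0" using mem[of 0 1] subspace_0[OF assms(1)] by simp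
  ultimately have "\<forall>s\<in>S. h s = 0" "h y = d" using h(2) by fastforce+
  then show ?thesis using h(1) dpos
    by (intro exI[of _ "Blinfun h"]) (auto simp: bounded_linear_Blinfun_apply)
qed



lemma perp_mem: "(y,ys) \<in> perp_op B \<longleftrightarrow> (\<forall>(x,xs)\<in>B. blinfun_apply ys x + blinfun_apply xs y = 0)"
  by (simp add: perp_op_def)

lemma neg_op_image: "neg_op B = (\<lambda>(x,xs). (x,-xs)) ` B"
  by (auto simp: neg_op_def)

lemma neg_adj: "neg_op (adjoint_op M) = perp_op M"
proof (rule set_eqI)
  fix p :: "'a::real_normed_vector \<times> ('a \<Rightarrow>\<^sub>L real)"
  obtain y ys where p: "p = (y,ys)" by fastforce
  have "(y,ys) \<in> neg_op (adjoint_op M) \<longleftrightarrow> (y,-ys) \<in> adjoint_op M"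
    by (force simp: neg_op_def)
  also have "\<dots> \<longleftrightarrow> (\<forall>(x,xs)\<in>M. blinfun_apply (-ys) x + blinfun_apply (-xs) y = 0)"
    by (simp add: adjoint_op_def perp_mem neg_op_image split_def)
  also have "\<dots> \<longleftrightarrow> (y,ys) \<in> perp_op M"
    by (auto simp: perp_mem blinfun.minus_left)
  finally show "p \<in> neg_op (adjoint_op M) \<longleftrightarrow> p \<in> perp_op M" using p by simp
qed

lemma skew_iff: "skew_op M \<longleftrightarrow> M = perp_op M"
  by (simp add: skew_op_def neg_adj)

lemma perp_anti: "A \<subseteq> B \<Longrightarrow> perp_op B \<subseteq> perp_op A"
  by (auto simp: perp_op_def)

lemma sc_perp:
  assumes "self_cancelling M" shows "M \<subseteq> perp_op M"
proof
  fix p assume "p \<in> M"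
  obtain y ys where p: "p = (y,ys)" by fastforce
  have "blinfun_apply ys x + blinfun_apply xs y = 0" if "(x,xs) \<in> M" for x xs
  proof -
    have sM: "subspace M" and c: "\<And>x xs. (x,xs)\<in>M \<Longrightarrow> blinfun_apply xs x = 0"
      using assms by (auto simp: self_cancelling_def)
    have "(x,xs) + (y,ys) \<in> M" using subspace_add[OF sM that] \<open>p\<in>M\<close> p by blast
    then have "(x + y, xs + ys) \<in> M" by simp
    then have "blinfun_apply (xs + ys) (x + y) = 0" using c by simp
    moreover have "blinfun_apply (xs + ys) (x + y) = blinfun_apply xs x + blinfun_apply xs y
       + blinfun_apply ys x + blinfun_apply ys y"
      by (simp add: blinfun.add_left blinfun.add_right)
    ultimately show ?thesis using c[OF that] c[of y ys] \<open>p\<in>M\<close> p by simp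
  qed
  then show "p \<in> perp_op M" using p by (auto simp: perp_mem)
qed

lemma msc_add:
  assumes "max_self_cancelling M" "(y,ys) \<in> perp_op M" "blinfun_apply ys y = 0"
  shows "(y,ys) \<in> M"
proof -
  have sM: "subspace M" and c: "\<And>x xs. (x,xs)\<in>M \<Longrightarrow> blinfun_apply xs x = 0"
    and mx: "\<And>N. self_cancelling N \<Longrightarrow> M \<subseteq> N \<Longrightarrow> N = M"
    using assms(1) by (auto simp: self_cancelling_def max_self_cancelling_def)
  define N where "N = {m + t *\<^sub>R (y,ys) | m t. m \<in> M}"
  have mem: "m + t *\<^sub>R (y,ys) \<in> N" if "m \<in> M" for m t unfolding N_def using that by blast
  have "subspace N" unfolding subspace_def
  proof (intro conjI ballI allI)
    show "0 \<in> N" using mem[of 0 0] subspace_0[OF sM] by (simp add: zero_prod_def)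
  next
    fix p q assume "p \<in> N" "q \<in> N"
    then obtain m t m' t' where "p = m + t *\<^sub>R (y,ys)" "m \<in> M" "q = m' + t' *\<^sub>R (y,ys)" "m' \<in> M"
      unfolding N_def by blast
    then show "p + q \<in> N" using mem[of "m + m'" "t + t'"] subspace_add[OF sM]
      by (simp add: algebra_simps scaleR_add_left)
  next
    fix r p assume "p \<in> N"
    then obtain m t where "p = m + t *\<^sub>R (y,ys)" "m \<in> M" unfolding N_def by blast
    then show "r *\<^sub>R p \<in> N" using mem[of "r *\<^sub>R m" "r * t"] subspace_scale[OF sM]
      by (simp add: scaleR_add_right)
  qed
  moreover have "blinfun_apply xs x = 0" if "(x,xs) \<in> N" for x xs
  proof -
    obtain m t where e: "(x,xs) = m + t *\<^sub>R (y,ys)" "m \<in> M" using \<open>(x,xs) \<in> N\<close> unfolding N_def by blast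
    obtain u us where m: "m = (u,us)" by fastforce
    have x: "x = u + t *\<^sub>R y" "xs = us + t *\<^sub>R ys" using e m by auto
    have "blinfun_apply ys u + blinfun_apply us y = 0" using assms(2) e(2) m by (auto simp: perp_mem)
    moreover have "blinfun_apply us u = 0" using c e(2) m by simp
    moreover have "blinfun_apply xs x = blinfun_apply us u + t * (blinfun_apply ys u + blinfun_apply us y)
        + t * t * blinfun_apply ys y"
      unfolding x by (simp add: blinfun.add_left blinfun.add_right blinfun.scaleR_left blinfun.scaleR_right algebra_simps)
    ultimately show ?thesis using assms(3) by simp
  qed
  ultimately have "self_cancelling N" by (auto simp: self_cancelling_def)
  moreover have "M \<subseteq> N" using mem[of _ 0] by auto
  ultimately have "N = M" by (rule mx)
  moreover have "(y,ys) \<in> N" using mem[of 0 1] subspace_0[OF sM] by simp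
  ultimately show ?thesis by simp
qed

theorem lemma7:
  fixes M :: "('a::banach \<times> ('a \<Rightarrow>\<^sub>L real)) set"
  assumes "subspace M"
  shows "(skew_op M \<longrightarrow> max_self_cancelling M)
    \<and> (max_self_cancelling M \<and> closed (dom_op M) \<longrightarrow> skew_op M)
    \<and> (max_self_cancelling M \<and> closed (ran_op M) \<and> reflexive_space TYPE('a) \<longrightarrow> skew_op M)"
proof (intro conjI impI)
  assume "skew_op M"
  then have eq: "M = perp_op M" by (simp add: skew_iff)
  have sc: "self_cancelling M"
    unfolding self_cancelling_def
  proof (intro conjI ballI assms)
    fix p assume "p \<in> M"
    obtain x xs where p: "p = (x,xs)" by fastforce
    then have "(x,xs) \<in> perp_op M" using \<open>p\<in>M\<close> eq by simp
    then have "blinfun_apply xs x + blinfun_apply xs x = 0" using \<open>p\<in>M\<close> p by (auto simp: perp_mem)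
    then show "case p of (x, xs) \<Rightarrow> blinfun_apply xs x = 0" using p by simp
  qed
  show "max_self_cancelling M"
    unfolding max_self_cancelling_def
  proof (intro conjI allI impI sc)
    fix N assume N: "self_cancelling N \<and> M \<subseteq> N"
    then have "N \<subseteq> perp_op N" using sc_perp by blast
    also have "\<dots> \<subseteq> perp_op M" using N perp_anti by blast
    finally show "N = M" using N eq by blast
  qed
next
  assume a: "max_self_cancelling M \<and> closed (dom_op M)"
  have sc: "self_cancelling M" using a by (simp add: max_self_cancelling_def)
  have c: "\<And>x xs. (x,xs)\<in>M \<Longrightarrow> blinfun_apply xs x = 0" using sc by (auto simp: self_cancelling_def)
  have sD: "subspace (dom_op M)" unfolding dom_op_def
    by (rule linear_subspace_image[OF bounded_linear_fst[THEN bounded_linear.linear] assms])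
  have "perp_op M \<subseteq> M"
  proof
    fix p assume pp: "p \<in> perp_op M"
    obtain y ys where p: "p = (y,ys)" by fastforce
    have yD: "y \<in> dom_op M"
    proof (rule ccontr)
      assume ny: "y \<notin> dom_op M"
      have cl: "closed (dom_op M)" using a by simp
      obtain f :: "'a \<Rightarrow>\<^sub>L real" where f: "\<forall>s\<in>dom_op M. blinfun_apply f s = 0" "blinfun_apply f y \<noteq> 0"
        using separation[OF sD cl ny] by blast
      have "blinfun_apply f x + blinfun_apply xs 0 = 0" if "(x,xs) \<in> M" for x xs
      proof -
        have "x \<in> dom_op M" unfolding dom_op_def using that by (metis fst_conv image_eqI)
        then show ?thesis using f(1) by simp
      qed
      then have "(0,f) \<in> perp_op M" unfolding perp_mem by blast
      moreover have "max_self_cancelling M" using a by simp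
      ultimately have "(0,f) \<in> M" using msc_add[of M 0 f] by simp
      then have "blinfun_apply ys 0 + blinfun_apply f y = 0" using pp p by (auto simp: perp_mem)
      then show False using f(2) by simp
    qed
    then obtain xs where xs: "(y,xs) \<in> M" by (force simp: dom_op_def)
    have "blinfun_apply ys y + blinfun_apply xs y = 0" using pp p xs by (auto simp: perp_mem)
    then have "blinfun_apply ys y = 0" using c[OF xs] by simp
    moreover have "max_self_cancelling M" using a by simp
    ultimately show "p \<in> M" using msc_add[of M y ys] pp p by simp
  qed
  then show "skew_op M" using sc_perp[OF sc] by (auto simp: skew_iff)
next
  assume a: "max_self_cancelling M \<and> closed (ran_op M) \<and> reflexive_space TYPE('a)"
  have sc: "self_cancelling M" using a by (simp add: max_self_cancelling_def)
  have c: "\<And>x xs. (x,xs)\<in>M \<Longrightarrow> blinfun_apply xs x = 0" using sc by (auto simp: self_cancelling_def)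
  have sR: "subspace (ran_op M)" unfolding ran_op_def
    by (rule linear_subspace_image[OF bounded_linear_snd[THEN bounded_linear.linear] assms])
  have "perp_op M \<subseteq> M"
  proof
    fix p assume pp: "p \<in> perp_op M"
    obtain y ys where p: "p = (y,ys)" by fastforce
    have yR: "ys \<in> ran_op M"
    proof (rule ccontr)
      assume ny: "ys \<notin> ran_op M"
      have cl: "closed (ran_op M)" using a by simp
      obtain \<phi> :: "('a \<Rightarrow>\<^sub>L real) \<Rightarrow>\<^sub>L real" where f: "\<forall>s\<in>ran_op M. blinfun_apply \<phi> s = 0" "blinfun_apply \<phi> ys \<noteq> 0"
        using separation[OF sR cl ny] by blast
      have "reflexive_space TYPE('a)" using a by simp
      then obtain z where z: "\<And>f. blinfun_apply \<phi> f = blinfun_apply f z"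
        unfolding reflexive_space_def by blast
      have "blinfun_apply 0 x + blinfun_apply xs z = 0" if "(x,xs) \<in> M" for x xs
      proof -
        have "xs \<in> ran_op M" unfolding ran_op_def using that by (metis snd_conv image_eqI)
        then show ?thesis using f(1) z[of xs] by simp
      qed
      then have "(z,0) \<in> perp_op M" unfolding perp_mem by blast
      moreover have "max_self_cancelling M" using a by simp
      ultimately have "(z,0) \<in> M" using msc_add[of M z 0] by simp
      then have "blinfun_apply ys z + blinfun_apply 0 y = 0" using pp p by (auto simp: perp_mem)
      then show False using f(2) z by simp
    qed
    then obtain x where xs: "(x,ys) \<in> M" by (force simp: ran_op_def)
    have "blinfun_apply ys x + blinfun_apply ys y = 0" using pp p xs by (auto simp: perp_mem)
    then have "blinfun_apply ys y = 0" using c[OF xs] by simp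
    moreover have "max_self_cancelling M" using a by simp
    ultimately show "p \<in> M" using msc_add[of M y ys] pp p by simp
  qed
  then show "skew_op M" using sc_perp[OF sc] by (auto simp: skew_iff)
qed

end
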